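(* Let $X$ be a random variable having finite CIGF $G_X(\alpha,\beta)$ for $(\alpha,\beta)\in D_X$. If $(0,1)\in D_X$, then $$\mathcal{CRE}_n(X)=\frac{(-1)^n}{n!}\frac{\partial^n}{\partial\beta^n}G_X(\alpha,\beta)\Big|_{\alpha=0,\beta=1},\qquad n\in\mathbb{N}_0.$$ If $(1,0)\in D_X$, then $$\mathcal{CE}_n(X)=\frac{(-1)^n}{n!}\frac{\partial^n}{\partial\alpha^n}G_X(\alpha,\beta)\Big|_{\alpha=1,\beta=0},\qquad n\in\mathbb{N}.$$
   Context: For a random variable $X$ with CDF $F$ and survival function $\overline F=1-F$, let $l=\inf\{x:F(x)>0\}$, $r=\sup\{x:\overline F(x)>0\}$. The CIGF of $X$ is $G_X(\alpha,\beta)=\int_l^r [F(x)]^\alpha[\overline F(x)]^\beta\,dx$ on $D_X=\{(\alpha,\beta)\in\mathbb{R}^2: G_X(\alpha,\beta)<\infty\}$. The generalized cumulative residual entropy of order $n$ is $\mathcal{CRE}_n(X)=\frac{1}{n!}\int_l^r\overline F(x)[-\log\overline F(x)]^n\,dx$ and the generalized cumulative entropy of order $n$ is $\mathcal{CE}_n(X)=\frac{1}{n!}\int_l^r F(x)[-\log F(x)]^n\,dx$. $\mathbb{N}$ denotes positive integers and $\mathbb{N}_0=\mathbb{N}\cup\{0\}$. *)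

theory Defs
  imports "HOL-Probability.Probability"
begin

text \<open>The support interval (l,r) is represented (up to its endpoints, a Lebesgue null set) by
  the set of points where 0 < F x < 1.\<close>

definition supp_int :: "real measure \<Rightarrow> real set" where
  "supp_int M = {x. 0 < cdf M x \<and> cdf M x < 1}"

definition CIGF :: "real measure \<Rightarrow> real \<Rightarrow> real \<Rightarrow> real" where
  "CIGF M a b = (LINT x : supp_int M | lborel. (cdf M x) powr a * (1 - cdf M x) powr b)"

definition CIGF_dom :: "real measure \<Rightarrow> (real \<times> real) set" where
  "CIGF_dom M = {(a, b). (\<integral>\<^sup>+ x \<in> supp_int M. ennreal ((cdf M x) powr a * (1 - cdf M x) powr b) \<partial>lborel) < \<infinity>}"

definition CRE_n :: "nat \<Rightarrow> real measure \<Rightarrow> real" where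
  "CRE_n n M = (1 / fact n) * (LINT x : supp_int M | lborel. (1 - cdf M x) * (- ln (1 - cdf M x)) ^ n)"

definition CE_n :: "nat \<Rightarrow> real measure \<Rightarrow> real" where
  "CE_n n M = (1 / fact n) * (LINT x : supp_int M | lborel. cdf M x * (- ln (cdf M x)) ^ n)"

definition has_nth_deriv_within :: "(real \<Rightarrow> real) \<Rightarrow> nat \<Rightarrow> real set \<Rightarrow> real \<Rightarrow> real \<Rightarrow> bool" where
  "has_nth_deriv_within f n S x D \<longleftrightarrow>
     (\<exists>g :: nat \<Rightarrow> real \<Rightarrow> real. g 0 = f \<and>
        (\<forall>k<n. \<forall>t\<in>S. (g k has_real_derivative g (Suc k) t) (at t within S)) \<and> g n x = D)"

end

theory Submission imports Defs begin

lemma dq_bound: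
  fixes u t y :: real
  assumes "0 < u" "u < 1" "1 \<le> t" "1 \<le> y" "y \<noteq> t"
  shows "\<bar>(u powr y - u powr t) / (y - t)\<bar> \<le> u * \<bar>ln u\<bar>"
proof -
  have D: "((\<lambda>s. u powr s) has_real_derivative u powr s * ln u) (at s)" for s
    using assms(1) by (auto intro!: derivative_eq_intros)
  have key: "\<bar>(u powr b - u powr a) / (b - a)\<bar> \<le> u * \<bar>ln u\<bar>" if a1: "1 \<le> a" and ab: "a < b" for a b
  proof -
    obtain z where z: "a < z" "z < b" "u powr b - u powr a = (b - a) * (u powr z * ln u)"
      using MVT2[OF ab, of "\<lambda>s. u powr s" "\<lambda>s. u powr s * ln u"] D by blast
    have "u powr z \<le> u powr 1" using z a1 assms by (intro powr_mono') auto
    then have "u powr z \<le> u" using assms by simp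
    then have "\<bar>u powr z * ln u\<bar> \<le> u * \<bar>ln u\<bar>" by (simp add: abs_mult mult_right_mono)
    with z ab show ?thesis by simp
  qed
  show ?thesis
  proof (cases "t < y")
    case True then show ?thesis using key[of t y] assms by simp
  next
    case False
    then have "y < t" using assms by simp
    then have "\<bar>(u powr t - u powr y) / (t - y)\<bar> \<le> u * \<bar>ln u\<bar>" using key[of y t] assms by simp
    moreover have "(u powr t - u powr y) / (t - y) = (u powr y - u powr t) / (y - t)"
      by (metis minus_divide_divide minus_diff_eq)
    ultimately show ?thesis by simp
  qed
qed

lemma int_lem:
  fixes u :: "real \<Rightarrow> real"
  assumes S: "S \<in> sets lborel" and um: "u \<in> borel_measurable lborel"
  and pos: "\<And>x. x \<in> S \<Longrightarrow> 0 < u x \<and> u x < 1"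
  and i1: "integrable lborel (\<lambda>x. indicator S x * u x)"
  and iN: "integrable lborel (\<lambda>x. indicator S x * (u x * ln (u x) ^ n))"
  and jn: "j \<le> n" and t1: "1 \<le> t"
  shows "integrable lborel (\<lambda>x. indicator S x * (u x powr t * ln (u x) ^ j))"
proof (rule Bochner_Integration.integrable_bound)
  show "integrable lborel (\<lambda>x. indicator S x * u x + \<bar>indicator S x * (u x * ln (u x) ^ n)\<bar>)"
    using i1 iN by auto
  show "(\<lambda>x. indicator S x * (u x powr t * ln (u x) ^ j)) \<in> borel_measurable lborel"
    using um S by measurable
  show "AE x in lborel. norm (indicator S x * (u x powr t * ln (u x) ^ j))
          \<le> norm (indicator S x * u x + \<bar>indicator S x * (u x * ln (u x) ^ n)\<bar>)"
  proof (intro AE_I2)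
    fix x
    show "norm (indicator S x * (u x powr t * ln (u x) ^ j))
          \<le> norm (indicator S x * u x + \<bar>indicator S x * (u x * ln (u x) ^ n)\<bar>)"
    proof (cases "x \<in> S")
      case False then show ?thesis by simp
    next
      case True
      then have p: "0 < u x" "u x < 1" using pos by auto
      have a: "u x powr t \<le> u x"
        using powr_mono'[of 1 t "u x"] p t1 by simp
      have b: "\<bar>ln (u x)\<bar> ^ j \<le> 1 + \<bar>ln (u x)\<bar> ^ n"
      proof (cases "\<bar>ln (u x)\<bar> \<le> 1")
        case True
        then have "\<bar>ln (u x)\<bar> ^ j \<le> 1" by (simp add: power_le_one)
        then show ?thesis by (smt (verit) zero_le_power abs_ge_zero)
      next
        case False
        then have "\<bar>ln (u x)\<bar> ^ j \<le> \<bar>ln (u x)\<bar> ^ n" using jn by (intro power_increasing) auto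
        then show ?thesis by simp
      qed
      have "\<bar>u x powr t * ln (u x) ^ j\<bar> = u x powr t * \<bar>ln (u x)\<bar> ^ j"
        by (simp add: abs_mult power_abs)
      also have "\<dots> \<le> u x * (1 + \<bar>ln (u x)\<bar> ^ n)"
        using a b p by (intro mult_mono) auto
      also have "\<dots> = u x + \<bar>u x * ln (u x) ^ n\<bar>"
        using p by (simp add: abs_mult power_abs algebra_simps)
      finally show ?thesis using True p by simp
    qed
  qed
qed

lemma deriv_lem:
  fixes u :: "real \<Rightarrow> real"
  assumes S: "S \<in> sets lborel" and um: "u \<in> borel_measurable lborel"
  and pos: "\<And>x. x \<in> S \<Longrightarrow> 0 < u x \<and> u x < 1"
  and i1: "integrable lborel (\<lambda>x. indicator S x * u x)"
  and iN: "integrable lborel (\<lambda>x. indicator S x * (u x * ln (u x) ^ n))"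
  and kn: "k < n" and t1: "1 \<le> t"
  shows "((\<lambda>t. integral\<^sup>L lborel (\<lambda>x. indicator S x * (u x powr t * ln (u x) ^ k)))
           has_real_derivative
          integral\<^sup>L lborel (\<lambda>x. indicator S x * (u x powr t * ln (u x) ^ Suc k))) (at t within {1..})"
proof -
  define H where "H = (\<lambda>k t. integral\<^sup>L lborel (\<lambda>x. indicator S x * (u x powr t * ln (u x) ^ k)))"
  have IL: "integrable lborel (\<lambda>x. indicator S x * (u x powr t' * ln (u x) ^ j))" if "j \<le> n" "1 \<le> t'" for j t'
    by (rule int_lem[OF S um _ i1 iN]) (use pos that in auto)
  have "((\<lambda>y. (H k y - H k t) / (y - t)) \<longlongrightarrow> H (Suc k) t) (at t within {1..})"
    unfolding tendsto_at_iff_sequentially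
  proof (intro allI impI)
    fix X :: "nat \<Rightarrow> real"
    assume X: "\<forall>i. X i \<in> {1..} - {t}" and Xt: "X \<longlonglongrightarrow> t"
    define s where "s = (\<lambda>i x. indicator S x * ((u x powr X i - u x powr t) / (X i - t) * ln (u x) ^ k))"
    have eq: "(H k (X i) - H k t) / (X i - t) = integral\<^sup>L lborel (s i)" for i
    proof -
      have X1: "1 \<le> X i" using X by auto
      have "(H k (X i) - H k t) / (X i - t) =
         integral\<^sup>L lborel (\<lambda>x. indicator S x * (u x powr X i * ln (u x) ^ k) - indicator S x * (u x powr t * ln (u x) ^ k)) / (X i - t)"
        unfolding H_def using kn X1 t1
        by (subst Bochner_Integration.integral_diff[OF IL IL]) auto
      also have "\<dots> = integral\<^sup>L lborel (\<lambda>x. (indicator S x * (u x powr X i * ln (u x) ^ k) - indicator S x * (u x powr t * ln (u x) ^ k)) / (X i - t))"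
        by simp
      also have "\<dots> = integral\<^sup>L lborel (s i)"
        unfolding s_def by (intro Bochner_Integration.integral_cong) (auto simp: field_simps)
      finally show ?thesis .
    qed
    have w: "integrable lborel (\<lambda>x. indicator S x * (u x * \<bar>ln (u x)\<bar> ^ Suc k))"
    proof -
      have "integrable lborel (\<lambda>x. \<bar>indicator S x * (u x powr 1 * ln (u x) ^ Suc k)\<bar>)"
        using IL[of "Suc k" 1] kn by auto
      moreover have "\<bar>indicator S x * (u x powr 1 * ln (u x) ^ Suc k)\<bar> = indicator S x * (u x * \<bar>ln (u x)\<bar> ^ Suc k)" for x
        using pos[of x] by (cases "x \<in> S") (auto simp: abs_mult power_abs)
      ultimately show ?thesis by simp
    qed
    have "(\<lambda>i. integral\<^sup>L lborel (s i)) \<longlonglongrightarrow> H (Suc k) t"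
      unfolding H_def
    proof (rule integral_dominated_convergence[OF _ _ w])
      show "(\<lambda>x. indicator S x * (u x powr t * ln (u x) ^ Suc k)) \<in> borel_measurable lborel"
        using S um by measurable
      show "s i \<in> borel_measurable lborel" for i
        unfolding s_def using S um by measurable
      show "AE x in lborel. (\<lambda>i. s i x) \<longlonglongrightarrow> indicator S x * (u x powr t * ln (u x) ^ Suc k)"
      proof (intro AE_I2)
        fix x
        show "(\<lambda>i. s i x) \<longlonglongrightarrow> indicator S x * (u x powr t * ln (u x) ^ Suc k)"
        proof (cases "x \<in> S")
          case False then show ?thesis by (simp add: s_def)
        next
          case True
          then have p: "0 < u x" by (simp add: pos)
          have D: "((\<lambda>y. u x powr y) has_real_derivative u x powr t * ln (u x)) (at t within {1..})"
          proof (rule has_field_derivative_at_within)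
            show "((\<lambda>y. u x powr y) has_real_derivative u x powr t * ln (u x)) (at t)"
              using p by (auto intro!: derivative_eq_intros)
          qed
          then have "((\<lambda>y. (u x powr y - u x powr t) / (y - t)) \<longlongrightarrow> u x powr t * ln (u x)) (at t within {1..})"
            by (simp add: has_field_derivative_iff)
          then have "(\<lambda>i. (u x powr X i - u x powr t) / (X i - t)) \<longlonglongrightarrow> u x powr t * ln (u x)"
            unfolding tendsto_at_iff_sequentially comp_def using X Xt by blast
          then have "(\<lambda>i. (u x powr X i - u x powr t) / (X i - t) * ln (u x) ^ k) \<longlonglongrightarrow> u x powr t * ln (u x) * ln (u x) ^ k"
            by (intro tendsto_intros)
          then show ?thesis using True by (simp add: s_def mult.assoc)
        qed
      qed
      show "AE x in lborel. norm (s i x) \<le> indicator S x * (u x * \<bar>ln (u x)\<bar> ^ Suc k)" for i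
      proof (intro AE_I2)
        fix x
        show "norm (s i x) \<le> indicator S x * (u x * \<bar>ln (u x)\<bar> ^ Suc k)"
        proof (cases "x \<in> S")
          case False then show ?thesis by (simp add: s_def)
        next
          case True
          then have p: "0 < u x" "u x < 1" using pos by auto
          have "\<bar>(u x powr X i - u x powr t) / (X i - t)\<bar> \<le> u x * \<bar>ln (u x)\<bar>"
            using dq_bound[OF p t1, of "X i"] X by auto
          then have "\<bar>(u x powr X i - u x powr t) / (X i - t)\<bar> * \<bar>ln (u x)\<bar> ^ k \<le> u x * \<bar>ln (u x)\<bar> * \<bar>ln (u x)\<bar> ^ k"
            by (intro mult_right_mono) auto
          then show ?thesis using True by (simp add: s_def abs_mult power_abs mult.assoc)
        qed
      qed
    qed
    then show "((\<lambda>y. (H k y - H k t) / (y - t)) \<circ> X) \<longlonglongrightarrow> H (Suc k) t"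
      by (simp add: comp_def eq)
  qed
  then show ?thesis unfolding H_def by (simp add: has_field_derivative_iff)
qed

lemma generic:
  fixes u f :: "real \<Rightarrow> real"
  assumes S: "S \<in> sets lborel" and um: "u \<in> borel_measurable lborel"
  and pos: "\<And>x. x \<in> S \<Longrightarrow> 0 < u x \<and> u x < 1"
  and i1: "integrable lborel (\<lambda>x. indicator S x * u x)"
  and iN: "set_integrable lborel S (\<lambda>x. u x * (- ln (u x)) ^ n)"
  and f: "\<And>b. f b = integral\<^sup>L lborel (\<lambda>x. indicator S x * (u x powr b * ln (u x) ^ 0))"
  shows "\<exists>D. has_nth_deriv_within f n {1..} 1 D \<and>
           (1 / fact n) * (LINT x:S|lborel. u x * (- ln (u x)) ^ n) = (-1) ^ n / fact n * D"
proof -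
  define H where "H = (\<lambda>k t. integral\<^sup>L lborel (\<lambda>x. indicator S x * (u x powr t * ln (u x) ^ k)))"
  have sgn: "indicator S x * (u x * ln (u x) ^ n) = (-1) ^ n * (indicator S x * (u x * (- ln (u x)) ^ n))" for x
  proof -
    have m: "(-1::real) ^ n * (-1) ^ n = 1" by (simp flip: power_mult_distrib)
    have e: "(- ln (u x)) ^ n = (-1) ^ n * ln (u x) ^ n" by (rule power_minus)
    have "(-1) ^ n * (indicator S x * (u x * ((-1) ^ n * ln (u x) ^ n)))
        = ((-1::real) ^ n * (-1) ^ n) * (indicator S x * (u x * ln (u x) ^ n))"
      by (simp only: mult_ac)
    then show ?thesis unfolding e m by simp
  qed
  have iN': "integrable lborel (\<lambda>x. indicator S x * (u x * ln (u x) ^ n))"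
  proof -
    have "integrable lborel (\<lambda>x. (-1) ^ n * (indicator S x * (u x * (- ln (u x)) ^ n)))"
      using iN unfolding set_integrable_def by (intro integrable_mult_right) simp
    then show ?thesis by (simp only: sgn[symmetric])
  qed
  have H0: "H 0 = f" unfolding H_def by (simp add: f fun_eq_iff)
  have der: "\<forall>k<n. \<forall>t\<in>{1..}. (H k has_real_derivative H (Suc k) t) (at t within {1..})"
  proof (intro allI impI ballI)
    fix k t assume "k < n" "t \<in> {1::real..}"
    then show "(H k has_real_derivative H (Suc k) t) (at t within {1..})"
      unfolding H_def using deriv_lem[OF S um pos i1 iN', of k t] by simp
  qed
  have Hn: "H n 1 = (-1) ^ n * (LINT x:S|lborel. u x * (- ln (u x)) ^ n)"
  proof -
    have "H n 1 = integral\<^sup>L lborel (\<lambda>x. indicator S x * (u x * ln (u x) ^ n))"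
      unfolding H_def
      by (intro Bochner_Integration.integral_cong) (auto simp: indicator_def pos less_imp_le)
    also have "\<dots> = (-1) ^ n * (LINT x:S|lborel. u x * (- ln (u x)) ^ n)"
      unfolding set_lebesgue_integral_def by (simp only: sgn integral_mult_right_zero real_scaleR_def)
    finally show ?thesis .
  qed
  have "has_nth_deriv_within f n {1..} 1 (H n 1)"
    unfolding has_nth_deriv_within_def
    by (rule exI[of _ H]) (intro conjI H0 der refl)
  moreover have "(1 / fact n) * (LINT x:S|lborel. u x * (- ln (u x)) ^ n) = (-1) ^ n / fact n * H n 1"
  proof -
    have m: "(-1::real) ^ n * (-1) ^ n = 1" by (simp flip: power_mult_distrib)
    have "(-1) ^ n / fact n * ((-1) ^ n * L) = ((-1) ^ n * (-1) ^ n) * L / (fact n :: real)" for L :: real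
      by simp
    then show ?thesis unfolding Hn using m by simp
  qed
  ultimately show ?thesis by blast
qed

lemma i1_lem:
  fixes u g :: "real \<Rightarrow> real"
  assumes S: "S \<in> sets lborel" and um: "u \<in> borel_measurable lborel"
  and gu: "\<And>x. x \<in> S \<Longrightarrow> g x = u x" and pos: "\<And>x. x \<in> S \<Longrightarrow> 0 \<le> u x"
  and fin: "(\<integral>\<^sup>+ x \<in> S. ennreal (g x) \<partial>lborel) < \<infinity>"
  shows "integrable lborel (\<lambda>x. indicator S x * u x)"
proof (rule integrableI_bounded)
  show "(\<lambda>x. indicator S x * u x) \<in> borel_measurable lborel" using S um by measurable
  have "(\<integral>\<^sup>+ x. ennreal (norm (indicator S x * u x)) \<partial>lborel) = (\<integral>\<^sup>+ x \<in> S. ennreal (g x) \<partial>lborel)"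
    by (intro nn_integral_cong) (auto simp: gu pos indicator_def)
  with fin show "(\<integral>\<^sup>+ x. ennreal (norm (indicator S x * u x)) \<partial>lborel) < \<infinity>" by simp
qed

theorem proposition2:
  fixes M :: "real measure"
  assumes "real_distribution M"
  shows "((0, 1) \<in> CIGF_dom M \<longrightarrow>
           (\<forall>n::nat. set_integrable lborel (supp_int M) (\<lambda>x. (1 - cdf M x) * (- ln (1 - cdf M x)) ^ n) \<longrightarrow>
              (\<exists>D. has_nth_deriv_within (\<lambda>b. CIGF M 0 b) n {1..} 1 D \<and>
                   CRE_n n M = (-1) ^ n / fact n * D)))
       \<and> ((1, 0) \<in> CIGF_dom M \<longrightarrow>
           (\<forall>n::nat. n \<ge> 1 \<longrightarrow> set_integrable lborel (supp_int M) (\<lambda>x. cdf M x * (- ln (cdf M x)) ^ n) \<longrightarrow>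
              (\<exists>D. has_nth_deriv_within (\<lambda>a. CIGF M a 0) n {1..} 1 D \<and>
                   CE_n n M = (-1) ^ n / fact n * D)))"
proof -
  interpret real_distribution M by fact
  have Fm: "cdf M \<in> borel_measurable lborel"
    using borel_measurable_mono[of "cdf M"] cdf_nondecreasing by (simp add: mono_def)
  have Fm1: "(\<lambda>x. 1 - cdf M x) \<in> borel_measurable lborel" using Fm by measurable
  have Sm: "supp_int M \<in> sets lborel"
    unfolding supp_int_def using Fm by measurable
  have inS: "0 < cdf M x \<and> cdf M x < 1" if "x \<in> supp_int M" for x
    using that by (simp add: supp_int_def)
  show ?thesis
  proof (intro conjI impI allI)
    assume dom: "(0, 1) \<in> CIGF_dom M"
    fix n :: nat
    assume iN: "set_integrable lborel (supp_int M) (\<lambda>x. (1 - cdf M x) * (- ln (1 - cdf M x)) ^ n)"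
    have i1: "integrable lborel (\<lambda>x. indicator (supp_int M) x * (1 - cdf M x))"
      by (rule i1_lem[OF Sm Fm1 _ _ dom[unfolded CIGF_dom_def mem_Collect_eq prod.case]]) (auto dest: inS)
    have f: "CIGF M 0 b = integral\<^sup>L lborel (\<lambda>x. indicator (supp_int M) x * ((1 - cdf M x) powr b * ln (1 - cdf M x) ^ 0))" for b
      unfolding CIGF_def set_lebesgue_integral_def
      by (intro Bochner_Integration.integral_cong) (auto simp: indicator_def dest: inS)
    show "\<exists>D. has_nth_deriv_within (\<lambda>b. CIGF M 0 b) n {1..} 1 D \<and> CRE_n n M = (-1) ^ n / fact n * D"
      unfolding CRE_n_def
      by (rule generic[OF Sm Fm1 _ i1 iN f]) (auto dest: inS)
  next
    assume dom: "(1, 0) \<in> CIGF_dom M"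
    fix n :: nat
    assume "1 \<le> n"
    assume iN: "set_integrable lborel (supp_int M) (\<lambda>x. cdf M x * (- ln (cdf M x)) ^ n)"
    have i1: "integrable lborel (\<lambda>x. indicator (supp_int M) x * cdf M x)"
      by (rule i1_lem[OF Sm Fm _ _ dom[unfolded CIGF_dom_def mem_Collect_eq prod.case]]) (auto dest: inS)
    have f: "CIGF M a 0 = integral\<^sup>L lborel (\<lambda>x. indicator (supp_int M) x * (cdf M x powr a * ln (cdf M x) ^ 0))" for a
      unfolding CIGF_def set_lebesgue_integral_def
      by (intro Bochner_Integration.integral_cong) (auto simp: indicator_def dest: inS)
    show "\<exists>D. has_nth_deriv_within (\<lambda>a. CIGF M a 0) n {1..} 1 D \<and> CE_n n M = (-1) ^ n / fact n * D"
      unfolding CE_n_def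
      by (rule generic[OF Sm Fm _ i1 iN f]) (auto dest: inS)
  qed
qed

end
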